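(* (a) There is a unique action of the symmetric group $S_n$ on $\mathcal{X}$ by $\mathbf{k}$-algebra automorphisms such that $\sigma\cdot x_{i,j}=x_{\sigma(i),\sigma(j)}$ for all $\sigma\in S_n$ and all pairs $(i,j)$ of distinct elements of $[n]$. (b) The ideal $\mathcal{J}$ is invariant under this action, so the quotient $\mathbf{k}$-algebra $\mathcal{X}/\mathcal{J}$ inherits an action of $S_n$ by $\mathbf{k}$-algebra automorphisms.
   Context: Let $\mathbf{k}$ be a commutative ring, let $\beta,\alpha\in\mathbf{k}$, and let $n$ be a positive integer; $[n]=\{1,\dots,n\}$. Let $\mathcal{X}=\mathbf{k}[x_{i,j}\mid 1\le i<j\le n]$ be the polynomial ring in the indeterminates $x_{i,j}$, and $\mathcal{J}$ the ideal generated by all $x_{i,j}x_{j,k}-x_{i,k}(x_{i,j}+x_{j,k}+\beta)-\alpha$ for $1\le i<j<k\le n$. For $(i,j)\in[n]^2$ with $i>j$, define the element $x_{i,j}\in\mathcal{X}$ by $x_{i,j}=-\beta-x_{j,i}$ (so $x_{i,j}$ is defined for all pairs of distinct $i,j\in[n]$). $S_n$ is the group of permutations of $[n]$. *)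

theory Defs
  imports "HOL-Library.Poly_Mapping" "HOL-Combinatorics.Permutations"
begin

text \<open>Multivariate polynomials over a commutative ring 'k in indeterminates indexed by pairs
  of naturals: a polynomial is a finitely supported map from monomials (finitely supported
  exponent vectors) to coefficients, with convolution product.\<close>

type_synonym 'k pX = "((nat \<times> nat) \<Rightarrow>\<^sub>0 nat) \<Rightarrow>\<^sub>0 'k"

definition Var :: "nat \<times> nat \<Rightarrow> 'k::comm_ring_1 pX" where
  "Var v = Poly_Mapping.single (Poly_Mapping.single v 1) 1"

definition Const :: "'k::comm_ring_1 \<Rightarrow> 'k pX" where
  "Const c = Poly_Mapping.single 0 c"

definition vars :: "'k::comm_ring_1 pX \<Rightarrow> (nat \<times> nat) set" where
  "vars p = (\<Union>m\<in>Poly_Mapping.keys p. Poly_Mapping.keys m)"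

definition idx :: "nat \<Rightarrow> (nat \<times> nat) set" where
  "idx n = {(i, j). 1 \<le> i \<and> i < j \<and> j \<le> n}"

definition Xring :: "nat \<Rightarrow> 'k::comm_ring_1 pX set" where
  "Xring n = {p. vars p \<subseteq> idx n}"

definition xx :: "'k::comm_ring_1 \<Rightarrow> nat \<Rightarrow> nat \<Rightarrow> 'k pX" where
  "xx \<beta> i j = (if i < j then Var (i, j) else - Const \<beta> - Var (j, i))"

definition Jgen :: "'k::comm_ring_1 \<Rightarrow> 'k \<Rightarrow> nat \<Rightarrow> nat \<Rightarrow> nat \<Rightarrow> 'k pX" where
  "Jgen \<beta> \<alpha> i j k = Var (i, j) * Var (j, k)
     - Var (i, k) * (Var (i, j) + Var (j, k) + Const \<beta>) - Const \<alpha>"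

inductive_set Jideal :: "nat \<Rightarrow> 'k::comm_ring_1 \<Rightarrow> 'k \<Rightarrow> 'k pX set"
  for n :: nat and \<beta> :: 'k and \<alpha> :: 'k where
  zero: "0 \<in> Jideal n \<beta> \<alpha>"
| step: "\<lbrakk>r \<in> Xring n; 1 \<le> i; i < j; j < k; k \<le> n; q \<in> Jideal n \<beta> \<alpha>\<rbrakk>
          \<Longrightarrow> r * Jgen \<beta> \<alpha> i j k + q \<in> Jideal n \<beta> \<alpha>"

definition alg_aut :: "nat \<Rightarrow> ('k::comm_ring_1 pX \<Rightarrow> 'k pX) \<Rightarrow> bool" where
  "alg_aut n f \<longleftrightarrow> bij_betw f (Xring n) (Xring n)
     \<and> f 1 = 1
     \<and> (\<forall>p\<in>Xring n. \<forall>q\<in>Xring n. f (p + q) = f p + f q)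
     \<and> (\<forall>p\<in>Xring n. \<forall>q\<in>Xring n. f (p * q) = f p * f q)
     \<and> (\<forall>c. \<forall>p\<in>Xring n. f (Const c * p) = Const c * f p)"

definition is_Sn_action :: "nat \<Rightarrow> 'k::comm_ring_1 \<Rightarrow> ((nat \<Rightarrow> nat) \<Rightarrow> 'k pX \<Rightarrow> 'k pX) \<Rightarrow> bool" where
  "is_Sn_action n \<beta> \<phi> \<longleftrightarrow>
     (\<forall>\<sigma>. \<sigma> permutes {1..n} \<longrightarrow> alg_aut n (\<phi> \<sigma>))
   \<and> (\<forall>p\<in>Xring n. \<phi> id p = p)
   \<and> (\<forall>\<sigma> \<tau>. \<sigma> permutes {1..n} \<longrightarrow> \<tau> permutes {1..n} \<longrightarrow>
        (\<forall>p\<in>Xring n. \<phi> (\<sigma> \<circ> \<tau>) p = \<phi> \<sigma> (\<phi> \<tau> p)))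
   \<and> (\<forall>\<sigma>. \<sigma> permutes {1..n} \<longrightarrow>
        (\<forall>i\<in>{1..n}. \<forall>j\<in>{1..n}. i \<noteq> j \<longrightarrow> \<phi> \<sigma> (xx \<beta> i j) = xx \<beta> (\<sigma> i) (\<sigma> j)))"

end

theory Submission imports Defs begin

definition mon :: "((nat\<times>nat) \<Rightarrow> 'k::comm_ring_1 pX) \<Rightarrow> ((nat\<times>nat) \<Rightarrow>\<^sub>0 nat) \<Rightarrow> 'k pX" where
  "mon s m = (\<Prod>v\<in>Poly_Mapping.keys m. s v ^ Poly_Mapping.lookup m v)"

definition ev :: "((nat\<times>nat) \<Rightarrow> 'k::comm_ring_1 pX) \<Rightarrow> 'k pX \<Rightarrow> 'k pX" where
  "ev s p = (\<Sum>m\<in>Poly_Mapping.keys p. Const (Poly_Mapping.lookup p m) * mon s m)"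

lemma pm_expand: "(p::'a \<Rightarrow>\<^sub>0 'b::comm_monoid_add) = (\<Sum>m\<in>Poly_Mapping.keys p. Poly_Mapping.single m (Poly_Mapping.lookup p m))"
proof (rule poly_mapping_eqI)
  fix k
  show "Poly_Mapping.lookup p k = Poly_Mapping.lookup (\<Sum>m\<in>Poly_Mapping.keys p. Poly_Mapping.single m (Poly_Mapping.lookup p m)) k"
  proof (cases "k \<in> Poly_Mapping.keys p")
    case True
    then show ?thesis
      by (simp add: lookup_sum lookup_single when_def sum.delta)
  next
    case False
    then show ?thesis
      by (auto simp add: lookup_sum lookup_single when_def in_keys_iff intro!: sum.neutral)
  qed
qed

lemma pm_induct:
  assumes "P 0" "\<And>m c. P (Poly_Mapping.single m c)" "\<And>p q. P p \<Longrightarrow> P q \<Longrightarrow> P (p+q)"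
  shows "P (p::'a \<Rightarrow>\<^sub>0 'b::comm_monoid_add)"
proof -
  have "\<And>A. finite A \<Longrightarrow> P (\<Sum>m\<in>A. Poly_Mapping.single m (Poly_Mapping.lookup p m))"
  proof -
    fix A :: "'a set" assume "finite A"
    then show "P (\<Sum>m\<in>A. Poly_Mapping.single m (Poly_Mapping.lookup p m))"
      by (induction A rule: finite_induct) (auto intro: assms)
  qed
  then show ?thesis using pm_expand[of p] by (metis finite_keys)
qed

lemma Const_add: "Const (a + b) = Const a + Const b" by (simp add: Const_def single_add)
lemma Const_mult: "Const (a * b) = Const a * Const b" by (simp add: Const_def mult_single)
lemma Const_zero[simp]: "Const 0 = 0" by (simp add: Const_def)
lemma Const_one[simp]: "Const 1 = 1" by (simp add: Const_def)

lemma mon_superset: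
  assumes "finite A" "Poly_Mapping.keys m \<subseteq> A"
  shows "mon s m = (\<Prod>v\<in>A. s v ^ Poly_Mapping.lookup m v)"
  unfolding mon_def
  by (rule prod.mono_neutral_left) (use assms in \<open>auto simp: in_keys_iff\<close>)

lemma mon_add: "mon s (m1 + m2) = mon s m1 * mon s m2"
proof -
  let ?A = "Poly_Mapping.keys m1 \<union> Poly_Mapping.keys m2"
  have "mon s (m1 + m2) = (\<Prod>v\<in>?A. s v ^ Poly_Mapping.lookup (m1+m2) v)"
    by (rule mon_superset) (auto dest: keys_add[THEN subsetD])
  also have "\<dots> = (\<Prod>v\<in>?A. s v ^ Poly_Mapping.lookup m1 v) * (\<Prod>v\<in>?A. s v ^ Poly_Mapping.lookup m2 v)"
    by (simp add: lookup_add power_add prod.distrib)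
  also have "\<dots> = mon s m1 * mon s m2"
    by (simp add: mon_superset[symmetric])
  finally show ?thesis .
qed

lemma mon_zero[simp]: "mon s 0 = 1" by (simp add: mon_def)
lemma mon_single[simp]: "mon s (Poly_Mapping.single v (Suc 0)) = s v"
  unfolding mon_def by simp
lemma mon_single1[simp]: "mon s (Poly_Mapping.single v 1) = s v"
  using mon_single by simp

lemma ev_single: "ev s (Poly_Mapping.single m c) = Const c * mon s m"
  by (simp add: ev_def)

lemma ev_zero[simp]: "ev s 0 = 0" by (simp add: ev_def)

lemma ev_add: "ev s (p + q) = ev s p + ev s q"
  unfolding ev_def
  by (rule setsum_keys_plus_distrib) (simp_all add: Const_add distrib_right)

lemma ev_uminus: "ev s (- p) = - ev s p"
proof -
  have "ev s p + ev s (- p) = 0" by (simp add: ev_add[symmetric])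
  from minus_unique[OF this] show ?thesis by simp
qed

lemma ev_diff: "ev s (p - q) = ev s p - ev s q"
  using ev_add[of s p "-q"] ev_uminus[of s q] by simp

lemma ev_mult: "ev s (p * q) = ev s p * ev s q"
proof (induction p rule: pm_induct)
  case (2 m a)
  show ?case
  proof (induction q rule: pm_induct)
    case (2 l b)
    show ?case by (simp add: mult_single ev_single mon_add Const_mult mult_ac)
  next
    case (3 p q)
    then show ?case by (simp add: distrib_left ev_add)
  qed simp
next
  case (3 p1 p2)
  then show ?case by (simp add: distrib_right ev_add)
qed simp

lemma ev_Const[simp]: "ev s (Const c) = Const c"
  using ev_single[of s 0 c] by (simp add: Const_def)

lemma ev_one[simp]: "ev s 1 = 1"
  using ev_Const[of s 1] by simp

lemma ev_Var[simp]: "ev s (Var v) = s v"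
  by (simp add: Var_def ev_single)

lemma Var_power: "Var v ^ k = Poly_Mapping.single (Poly_Mapping.single v k) 1"
proof (induction k)
  case 0 then show ?case by simp
next
  case (Suc k)
  have "Poly_Mapping.single v (Suc k) = Poly_Mapping.single v 1 + Poly_Mapping.single v k"
    by (simp add: single_add[symmetric])
  then show ?case using Suc by (simp add: Var_def mult_single)
qed

lemma prod_single: "finite A \<Longrightarrow> (\<Prod>v\<in>A. Poly_Mapping.single (g v) (1::'k::comm_ring_1)) = Poly_Mapping.single (\<Sum>v\<in>A. g v) 1"
  by (induction A rule: finite_induct) (simp_all add: mult_single)

lemma ev_Var_id: "ev Var p = (p::'k::comm_ring_1 pX)"
proof (induction p rule: pm_induct)
  case (2 m c)
  have "mon (Var::_ \<Rightarrow> 'k pX) m = Poly_Mapping.single m 1"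
    unfolding mon_def Var_power
    by (subst prod_single) (simp_all add: pm_expand[of m, symmetric])
  have "Const c * Poly_Mapping.single m (1::'k) = Poly_Mapping.single m c"
    by (simp add: Const_def mult_single)
  then show ?case using \<open>mon Var m = _\<close> by (simp add: ev_single)
next
  case (3 p q) then show ?case by (simp add: ev_add)
qed simp

lemma vars_add: "vars (p + q) \<subseteq> vars p \<union> vars q"
  unfolding vars_def using keys_add[of p q] by blast

lemma vars_uminus[simp]: "vars (- p) = vars p"
  unfolding vars_def by simp

lemma vars_diff: "vars (p - q) \<subseteq> vars p \<union> vars q"
  using vars_add[of p "-q"] by simp

lemma vars_mult: "vars (p * q) \<subseteq> vars p \<union> vars q"
proof
  fix x assume "x \<in> vars (p * q)"
  then obtain m where m: "m \<in> Poly_Mapping.keys (p * q)" "x \<in> Poly_Mapping.keys m"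
    unfolding vars_def by blast
  from m(1) obtain a b where ab: "m = a + b" "a \<in> Poly_Mapping.keys p" "b \<in> Poly_Mapping.keys q"
    using keys_mult[of p q] by blast
  from m(2) ab(1) have "x \<in> Poly_Mapping.keys a \<or> x \<in> Poly_Mapping.keys b"
    using keys_add[of a b] by blast
  then show "x \<in> vars p \<union> vars q" using ab unfolding vars_def by blast
qed

lemma vars_Const[simp]: "vars (Const c) = {}"
  unfolding vars_def Const_def by simp

lemma vars_zero[simp]: "vars 0 = {}"
  unfolding vars_def by simp

lemma vars_one[simp]: "vars 1 = {}"
  unfolding vars_def by simp

lemma vars_Var[simp]: "vars (Var v :: 'k::comm_ring_1 pX) = {v}"
  unfolding vars_def Var_def by simp

lemma vars_add_sub: "vars p \<subseteq> A \<Longrightarrow> vars q \<subseteq> A \<Longrightarrow> vars (p + q) \<subseteq> A"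
  using vars_add by blast
lemma vars_diff_sub: "vars p \<subseteq> A \<Longrightarrow> vars q \<subseteq> A \<Longrightarrow> vars (p - q) \<subseteq> A"
  using vars_diff by blast
lemma vars_mult_sub: "vars p \<subseteq> A \<Longrightarrow> vars q \<subseteq> A \<Longrightarrow> vars (p * q) \<subseteq> A"
  using vars_mult by blast
lemma vars_power_sub: "vars p \<subseteq> A \<Longrightarrow> vars (p ^ k) \<subseteq> A"
  by (induction k) (simp_all add: vars_mult_sub)
lemma vars_sum_sub: "(\<And>x. x \<in> B \<Longrightarrow> vars (g x) \<subseteq> A) \<Longrightarrow> vars (sum g B) \<subseteq> A"
  by (induction B rule: infinite_finite_induct) (simp_all add: vars_add_sub)
lemma vars_prod_sub: "(\<And>x. x \<in> B \<Longrightarrow> vars (g x) \<subseteq> A) \<Longrightarrow> vars (prod g B) \<subseteq> A"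
  by (induction B rule: infinite_finite_induct) (simp_all add: vars_mult_sub)

lemma keys_sub_vars: "m \<in> Poly_Mapping.keys p \<Longrightarrow> Poly_Mapping.keys m \<subseteq> vars p"
  unfolding vars_def by blast

lemma ev_vars:
  assumes "\<And>v. v \<in> vars p \<Longrightarrow> vars (s v) \<subseteq> A"
  shows "vars (ev s p) \<subseteq> A"
proof -
  have h: "\<And>m v. m \<in> Poly_Mapping.keys p \<Longrightarrow> v \<in> Poly_Mapping.keys m \<Longrightarrow> vars (s v) \<subseteq> A"
    using assms unfolding vars_def by blast
  show ?thesis unfolding ev_def mon_def
    by (intro vars_sum_sub vars_mult_sub vars_prod_sub vars_power_sub) (simp_all add: h)
qed

lemma ev_cong:
  assumes "\<And>v. v \<in> vars p \<Longrightarrow> s v = t v"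
  shows "ev s p = ev t p"
proof -
  have h: "\<And>m v. m \<in> Poly_Mapping.keys p \<Longrightarrow> v \<in> Poly_Mapping.keys m \<Longrightarrow> s v = t v"
    using assms unfolding vars_def by blast
  show ?thesis unfolding ev_def mon_def
    by (intro sum.cong refl arg_cong2[where f="(*)"] prod.cong) (simp_all add: h)
qed

lemma hom_ev:
  fixes f :: "'k::comm_ring_1 pX \<Rightarrow> 'k pX"
  assumes one: "f 1 = 1"
    and add: "\<And>p q. vars p \<subseteq> A \<Longrightarrow> vars q \<subseteq> A \<Longrightarrow> f (p + q) = f p + f q"
    and mult: "\<And>p q. vars p \<subseteq> A \<Longrightarrow> vars q \<subseteq> A \<Longrightarrow> f (p * q) = f p * f q"
    and cm: "\<And>c p. vars p \<subseteq> A \<Longrightarrow> f (Const c * p) = Const c * f p"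
    and p: "vars p \<subseteq> A"
  shows "f p = ev (\<lambda>v. f (Var v)) p"
proof -
  have z: "f 0 = 0"
    using add[of 0 0] by simp
  have fsum: "f (sum g B) = (\<Sum>x\<in>B. f (g x))" if "\<And>x. x \<in> B \<Longrightarrow> vars (g x) \<subseteq> A" for g B
    using that
  proof (induction B rule: infinite_finite_induct)
    case (insert x F)
    then show ?case by (simp add: add vars_sum_sub)
  qed (auto simp: z)
  have fprod: "f (prod g B) = (\<Prod>x\<in>B. f (g x))" if "\<And>x. x \<in> B \<Longrightarrow> vars (g x) \<subseteq> A" for g B
    using that
  proof (induction B rule: infinite_finite_induct)
    case (insert x F)
    then show ?case by (simp add: mult vars_prod_sub)
  qed (auto simp: one)
  have fpow: "f (q ^ k) = f q ^ k" if "vars q \<subseteq> A" for q k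
    using that by (induction k) (simp_all add: one mult vars_power_sub)
  have "f p = f (ev Var p)" by (simp add: ev_Var_id)
  also have "\<dots> = ev (\<lambda>v. f (Var v)) p"
  proof -
    have hv: "\<And>m v. m \<in> Poly_Mapping.keys p \<Longrightarrow> v \<in> Poly_Mapping.keys m \<Longrightarrow> v \<in> A"
      using p keys_sub_vars[of _ p] by fastforce
    have h3: "vars ((Var v::'k pX)^k) \<subseteq> A" if "m \<in> Poly_Mapping.keys p" "v \<in> Poly_Mapping.keys m" for m v k
      using hv[OF that] by (intro vars_power_sub) simp
    have h: "vars (\<Prod>v\<in>Poly_Mapping.keys m. (Var v::'k pX) ^ Poly_Mapping.lookup m v) \<subseteq> A"
      if "m \<in> Poly_Mapping.keys p" for m
      by (intro vars_prod_sub h3[OF that])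
    have h2: "vars (Const c * (\<Prod>v\<in>Poly_Mapping.keys m. (Var v::'k pX) ^ Poly_Mapping.lookup m v)) \<subseteq> A"
      if "m \<in> Poly_Mapping.keys p" for m c
      by (intro vars_mult_sub h that) simp
    have "f (\<Sum>m\<in>Poly_Mapping.keys p. Const (Poly_Mapping.lookup p m) * (\<Prod>v\<in>Poly_Mapping.keys m. (Var v::'k pX) ^ Poly_Mapping.lookup m v))
      = (\<Sum>m\<in>Poly_Mapping.keys p. f (Const (Poly_Mapping.lookup p m) * (\<Prod>v\<in>Poly_Mapping.keys m. (Var v::'k pX) ^ Poly_Mapping.lookup m v)))"
      by (rule fsum) (rule h2)
    also have "\<dots> = (\<Sum>m\<in>Poly_Mapping.keys p. Const (Poly_Mapping.lookup p m) * (\<Prod>v\<in>Poly_Mapping.keys m. f (Var v) ^ Poly_Mapping.lookup m v))"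
    proof (rule sum.cong[OF refl])
      fix m assume m: "m \<in> Poly_Mapping.keys p"
      have "f (\<Prod>v\<in>Poly_Mapping.keys m. (Var v::'k pX) ^ Poly_Mapping.lookup m v) = (\<Prod>v\<in>Poly_Mapping.keys m. f ((Var v::'k pX) ^ Poly_Mapping.lookup m v))"
        by (rule fprod) (rule h3[OF m])
      also have "\<dots> = (\<Prod>v\<in>Poly_Mapping.keys m. f (Var v) ^ Poly_Mapping.lookup m v)"
        by (rule prod.cong[OF refl], rule fpow) (simp add: hv[OF m])
      finally show "f (Const (Poly_Mapping.lookup p m) * (\<Prod>v\<in>Poly_Mapping.keys m. (Var v::'k pX) ^ Poly_Mapping.lookup m v))
         = Const (Poly_Mapping.lookup p m) * (\<Prod>v\<in>Poly_Mapping.keys m. f (Var v) ^ Poly_Mapping.lookup m v)"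
        using cm[OF h[OF m]] by simp
    qed
    finally show ?thesis unfolding ev_def mon_def .
  qed
  finally show ?thesis .
qed

lemma ev_sum: "ev s (sum g B) = (\<Sum>x\<in>B. ev s (g x))"
  by (induction B rule: infinite_finite_induct) (simp_all add: ev_add)

lemma ev_comp: "ev s (ev t p) = ev (\<lambda>v. ev s (t v)) p"
proof -
  have "ev s (ev t p) = ev (\<lambda>v. ev s (ev t (Var v))) p"
    by (rule hom_ev[where A=UNIV]) (simp_all add: ev_add ev_mult)
  then show ?thesis by simp
qed


definition act :: "'k::comm_ring_1 \<Rightarrow> (nat \<Rightarrow> nat) \<Rightarrow> 'k pX \<Rightarrow> 'k pX" where
  "act \<beta> \<sigma> = ev (\<lambda>v. xx \<beta> (\<sigma> (fst v)) (\<sigma> (snd v)))"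

lemma xx_swap: "a \<noteq> b \<Longrightarrow> xx \<beta> a b = - Const \<beta> - xx \<beta> b a"
  unfolding xx_def by auto

lemma vars_xx:
  assumes "a \<in> {1..n}" "b \<in> {1..n}" "a \<noteq> b"
  shows "vars (xx \<beta> a b) \<subseteq> idx n"
proof (cases "a < b")
  case True then show ?thesis using assms by (simp add: xx_def idx_def)
next
  case False
  then have "vars (xx \<beta> a b) \<subseteq> {(b,a)}"
    using vars_diff[of "- Const \<beta>" "Var (b,a)"] by (simp add: xx_def)
  then show ?thesis using assms False by (auto simp: idx_def)
qed

lemma act_Var[simp]: "act \<beta> \<sigma> (Var v) = xx \<beta> (\<sigma> (fst v)) (\<sigma> (snd v))"
  by (simp add: act_def)

lemma act_add: "act \<beta> \<sigma> (p + q) = act \<beta> \<sigma> p + act \<beta> \<sigma> q" by (simp add: act_def ev_add)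
lemma act_diff: "act \<beta> \<sigma> (p - q) = act \<beta> \<sigma> p - act \<beta> \<sigma> q" by (simp add: act_def ev_diff)
lemma act_uminus: "act \<beta> \<sigma> (- p) = - act \<beta> \<sigma> p" by (simp add: act_def ev_uminus)
lemma act_mult: "act \<beta> \<sigma> (p * q) = act \<beta> \<sigma> p * act \<beta> \<sigma> q" by (simp add: act_def ev_mult)
lemma act_Const[simp]: "act \<beta> \<sigma> (Const c) = Const c" by (simp add: act_def)
lemma act_one[simp]: "act \<beta> \<sigma> 1 = 1" by (simp add: act_def)

lemma act_xx:
  assumes s: "\<sigma> permutes {1..n}" and ab: "a \<in> {1..n}" "b \<in> {1..n}" "a \<noteq> b"
  shows "act \<beta> \<sigma> (xx \<beta> a b) = xx \<beta> (\<sigma> a) (\<sigma> b)"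
proof (cases "a < b")
  case True then show ?thesis by (simp add: xx_def)
next
  case False
  have ne: "\<sigma> a \<noteq> \<sigma> b" using permutes_inj[OF s] ab by (auto dest: injD)
  have "xx \<beta> a b = - Const \<beta> - Var (b, a)" using False by (simp add: xx_def)
  then have "act \<beta> \<sigma> (xx \<beta> a b) = - Const \<beta> - xx \<beta> (\<sigma> b) (\<sigma> a)"
    by (simp add: act_diff act_uminus)
  also have "\<dots> = xx \<beta> (\<sigma> a) (\<sigma> b)" by (rule sym, rule xx_swap[OF ne])
  finally show ?thesis .
qed

lemma idx_mem: "v \<in> idx n \<Longrightarrow> fst v \<in> {1..n} \<and> snd v \<in> {1..n} \<and> fst v < snd v"
  by (auto simp: idx_def)

lemma act_in:
  assumes s: "\<sigma> permutes {1..n}" and p: "vars p \<subseteq> idx n"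
  shows "vars (act \<beta> \<sigma> p) \<subseteq> idx n"
  unfolding act_def
proof (rule ev_vars)
  fix v assume "v \<in> vars p"
  then have v: "fst v \<in> {1..n}" "snd v \<in> {1..n}" "fst v < snd v" using p idx_mem by blast+
  have ne: "\<sigma> (fst v) \<noteq> \<sigma> (snd v)" using permutes_inj[OF s] v by (auto dest: injD)
  show "vars (xx \<beta> (\<sigma> (fst v)) (\<sigma> (snd v))) \<subseteq> idx n"
    by (rule vars_xx) (use v ne permutes_in_image[OF s] in auto)
qed

lemma act_comp:
  assumes s: "\<sigma> permutes {1..n}" and t: "\<tau> permutes {1..n}" and p: "vars p \<subseteq> idx n"
  shows "act \<beta> \<sigma> (act \<beta> \<tau> p) = act \<beta> (\<sigma> \<circ> \<tau>) p"
  unfolding act_def ev_comp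
proof (rule ev_cong)
  fix v assume "v \<in> vars p"
  then have v: "fst v \<in> {1..n}" "snd v \<in> {1..n}" "fst v < snd v" using p idx_mem by blast+
  have ne: "\<tau> (fst v) \<noteq> \<tau> (snd v)" using permutes_inj[OF t] v by (auto dest: injD)
  show "ev (\<lambda>v. xx \<beta> (\<sigma> (fst v)) (\<sigma> (snd v))) (xx \<beta> (\<tau> (fst v)) (\<tau> (snd v))) =
         xx \<beta> ((\<sigma> \<circ> \<tau>) (fst v)) ((\<sigma> \<circ> \<tau>) (snd v))"
    using act_xx[OF s, of "\<tau> (fst v)" "\<tau> (snd v)" \<beta>] v ne permutes_in_image[OF t]
    by (simp add: act_def)
qed

lemma act_id:
  assumes p: "vars p \<subseteq> idx n"
  shows "act \<beta> id p = p"
proof -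
  have "act \<beta> id p = ev Var p"
    unfolding act_def
  proof (rule ev_cong)
    fix v assume "v \<in> vars p"
    then have "fst v < snd v" using p idx_mem by blast
    then show "xx \<beta> (id (fst v)) (id (snd v)) = Var v" by (simp add: xx_def)
  qed
  then show ?thesis by (simp add: ev_Var_id)
qed

definition RR :: "'k::comm_ring_1 \<Rightarrow> 'k \<Rightarrow> nat \<Rightarrow> nat \<Rightarrow> nat \<Rightarrow> 'k pX" where
  "RR \<beta> \<alpha> a b c = xx \<beta> a b * xx \<beta> b c - xx \<beta> a c * (xx \<beta> a b + xx \<beta> b c + Const \<beta>) - Const \<alpha>"

lemma RR_swap12: "a \<noteq> b \<Longrightarrow> RR \<beta> \<alpha> b a c = RR \<beta> \<alpha> a b c"
proof -
  assume "a \<noteq> b"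
  then have e: "xx \<beta> b a = - Const \<beta> - xx \<beta> a b" by (rule xx_swap[OF not_sym])
  show ?thesis unfolding RR_def e by (simp add: algebra_simps)
qed

lemma RR_swap23: "b \<noteq> c \<Longrightarrow> RR \<beta> \<alpha> a c b = RR \<beta> \<alpha> a b c"
proof -
  assume "b \<noteq> c"
  then have e: "xx \<beta> c b = - Const \<beta> - xx \<beta> b c" by (rule xx_swap[OF not_sym])
  show ?thesis unfolding RR_def e by (simp add: algebra_simps)
qed

lemma J_add: "a \<in> Jideal n \<beta> \<alpha> \<Longrightarrow> b \<in> Jideal n \<beta> \<alpha> \<Longrightarrow> a + b \<in> Jideal n \<beta> \<alpha>"
  by (induction a rule: Jideal.induct) (auto simp: add.assoc intro: Jideal.step)

lemma J_mult: "a \<in> Jideal n \<beta> \<alpha> \<Longrightarrow> r \<in> Xring n \<Longrightarrow> r * a \<in> Jideal n \<beta> \<alpha>"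
proof (induction a rule: Jideal.induct)
  case zero then show ?case by (simp add: Jideal.zero)
next
  case (step r' i j k q)
  have "r * r' \<in> Xring n" using step by (simp add: Xring_def vars_mult_sub)
  then have "(r * r') * Jgen \<beta> \<alpha> i j k + r * q \<in> Jideal n \<beta> \<alpha>"
    using step by (intro Jideal.step) auto
  then show ?case by (simp add: algebra_simps)
qed

lemma J_gen: "1 \<le> i \<Longrightarrow> i < j \<Longrightarrow> j < k \<Longrightarrow> k \<le> n \<Longrightarrow> Jgen \<beta> \<alpha> i j k \<in> Jideal n \<beta> \<alpha>"
  using Jideal.step[of 1 n i j k 0 \<beta> \<alpha>] by (simp add: Xring_def Jideal.zero)

lemma RR_sorted: "i < j \<Longrightarrow> j < k \<Longrightarrow> RR \<beta> \<alpha> i j k = Jgen \<beta> \<alpha> i j k"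
  by (simp add: RR_def Jgen_def xx_def)

lemma RR_in_J:
  assumes "a \<in> {1..n}" "b \<in> {1..n}" "c \<in> {1..n}" "a \<noteq> b" "b \<noteq> c" "a \<noteq> c"
  shows "RR \<beta> \<alpha> a b c \<in> Jideal n \<beta> \<alpha>"
proof -
  have S: "RR \<beta> \<alpha> x y z \<in> Jideal n \<beta> \<alpha>" if "x < y" "y < z" "1 \<le> x" "z \<le> n" for x y z
    using J_gen[of x y z n \<beta> \<alpha>] that RR_sorted[of x y z \<beta> \<alpha>] by simp
  consider "a < b" "b < c" | "a < c" "c < b" | "b < a" "a < c" | "b < c" "c < a" | "c < a" "a < b" | "c < b" "b < a"
    using assms by linarith
  then show ?thesis
  proof cases
    case 1 then show ?thesis using S assms by auto
  next
    case 2 then show ?thesis using S[of a c b] assms RR_swap23[of b c \<beta> \<alpha> a] by auto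
  next
    case 3 then show ?thesis using S[of b a c] assms RR_swap12[of a b \<beta> \<alpha> c] by auto
  next
    case 4 then show ?thesis using S[of b c a] assms RR_swap12[of a b \<beta> \<alpha> c] RR_swap23[of a c \<beta> \<alpha> b] by auto
  next
    case 5 then show ?thesis using S[of c a b] assms RR_swap23[of b c \<beta> \<alpha> a] RR_swap12[of a c \<beta> \<alpha> b] by auto
  next
    case 6 then show ?thesis using S[of c b a] assms RR_swap12[of a b \<beta> \<alpha> c] RR_swap23[of a c \<beta> \<alpha> b] RR_swap12[of b c \<beta> \<alpha> a] by auto
  qed
qed

lemma act_J:
  assumes s: "\<sigma> permutes {1..n}" and a: "a \<in> Jideal n \<beta> \<alpha>"
  shows "act \<beta> \<sigma> a \<in> Jideal n \<beta> \<alpha>"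
  using a
proof (induction a rule: Jideal.induct)
  case zero then show ?case using act_Const[of \<beta> \<sigma> 0] by (simp add: Jideal.zero)
next
  case (step r i j k q)
  have "act \<beta> \<sigma> (Jgen \<beta> \<alpha> i j k) = RR \<beta> \<alpha> (\<sigma> i) (\<sigma> j) (\<sigma> k)"
    by (simp add: Jgen_def RR_def act_diff act_add act_mult)
  moreover have "RR \<beta> \<alpha> (\<sigma> i) (\<sigma> j) (\<sigma> k) \<in> Jideal n \<beta> \<alpha>"
    using step permutes_inj[OF s] permutes_in_image[OF s]
    by (intro RR_in_J) (auto dest: injD)
  moreover have "act \<beta> \<sigma> r \<in> Xring n" using step act_in[OF s] by (simp add: Xring_def)
  ultimately show ?case using step
    by (simp add: act_add act_mult J_add J_mult)
qed


theorem proposition3p21: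
  fixes n :: nat and \<beta> \<alpha> :: "'k::comm_ring_1"
  assumes "n \<ge> 1"
  shows "\<exists>\<phi>. is_Sn_action n \<beta> \<phi>
     \<and> (\<forall>\<psi>. is_Sn_action n \<beta> \<psi> \<longrightarrow>
          (\<forall>\<sigma>. \<sigma> permutes {1..n} \<longrightarrow> (\<forall>p\<in>Xring n. \<psi> \<sigma> p = \<phi> \<sigma> p)))
     \<and> (\<forall>\<sigma>. \<sigma> permutes {1..n} \<longrightarrow> \<phi> \<sigma> ` Jideal n \<beta> \<alpha> \<subseteq> Jideal n \<beta> \<alpha>)
     \<and> (\<forall>\<sigma>. \<sigma> permutes {1..n} \<longrightarrow>
          (\<forall>p\<in>Xring n. \<forall>q\<in>Xring n. p - q \<in> Jideal n \<beta> \<alpha> \<longrightarrow> \<phi> \<sigma> p - \<phi> \<sigma> q \<in> Jideal n \<beta> \<alpha>))"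
proof (intro exI conjI allI impI ballI)
  have aut: "alg_aut n (act \<beta> \<sigma>)" if s: "\<sigma> permutes {1..n}" for \<sigma>
  proof -
    have si: "inv \<sigma> permutes {1..n}" using permutes_inv[OF s] .
    have "bij_betw (act \<beta> \<sigma>) (Xring n) (Xring n)"
    proof (rule bij_betw_byWitness[where f'="act \<beta> (inv \<sigma>)"])
      show "\<forall>a\<in>(Xring n :: 'k pX set). act \<beta> (inv \<sigma>) (act \<beta> \<sigma> a) = a"
      proof
        fix a :: "'k pX" assume "a \<in> Xring n"
        then have a: "vars a \<subseteq> idx n" by (simp add: Xring_def)
        show "act \<beta> (inv \<sigma>) (act \<beta> \<sigma> a) = a"
          using act_comp[OF si s a, of \<beta>] act_id[OF a, of \<beta>] permutes_inv_o(2)[OF s] by simp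
      qed
      show "\<forall>a\<in>(Xring n :: 'k pX set). act \<beta> \<sigma> (act \<beta> (inv \<sigma>) a) = a"
      proof
        fix a :: "'k pX" assume "a \<in> Xring n"
        then have a: "vars a \<subseteq> idx n" by (simp add: Xring_def)
        show "act \<beta> \<sigma> (act \<beta> (inv \<sigma>) a) = a"
          using act_comp[OF s si a, of \<beta>] act_id[OF a, of \<beta>] permutes_inv_o(1)[OF s] by simp
      qed
      show "act \<beta> \<sigma> ` Xring n \<subseteq> Xring n" using act_in[OF s] by (auto simp: Xring_def)
      show "act \<beta> (inv \<sigma>) ` Xring n \<subseteq> Xring n" using act_in[OF si] by (auto simp: Xring_def)
    qed
    then show ?thesis unfolding alg_aut_def by (simp add: act_add act_mult)
  qed
  show act: "is_Sn_action n \<beta> (act \<beta>)"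
    unfolding is_Sn_action_def
  proof (intro conjI allI impI ballI)
    fix \<sigma> :: "nat \<Rightarrow> nat" assume "\<sigma> permutes {1..n}" then show "alg_aut n (act \<beta> \<sigma>)" by (rule aut)
  next
    fix p :: "'k pX" assume "p \<in> Xring n" then show "act \<beta> id p = p" by (intro act_id) (simp add: Xring_def)
  next
    fix \<sigma> \<tau> :: "nat \<Rightarrow> nat" and p :: "'k pX"
    assume "\<sigma> permutes {1..n}" "\<tau> permutes {1..n}" "p \<in> Xring n"
    then show "act \<beta> (\<sigma> \<circ> \<tau>) p = act \<beta> \<sigma> (act \<beta> \<tau> p)"
      using act_comp[of \<sigma> n \<tau> p \<beta>] by (simp add: Xring_def)
  next
    fix \<sigma> :: "nat \<Rightarrow> nat" and i j
    assume "\<sigma> permutes {1..n}" "i \<in> {1..n}" "j \<in> {1..n}" "i \<noteq> j"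
    then show "act \<beta> \<sigma> (xx \<beta> i j) = xx \<beta> (\<sigma> i) (\<sigma> j)" by (rule act_xx)
  qed
  fix \<sigma> :: "nat \<Rightarrow> nat"
  assume s: "\<sigma> permutes {1..n}"
  show "act \<beta> \<sigma> ` Jideal n \<beta> \<alpha> \<subseteq> Jideal n \<beta> \<alpha>" using act_J[OF s] by blast
  {
    fix p q :: "'k pX" assume "p - q \<in> Jideal n \<beta> \<alpha>"
    then show "act \<beta> \<sigma> p - act \<beta> \<sigma> q \<in> Jideal n \<beta> \<alpha>"
      using act_J[OF s] by (simp add: act_diff[symmetric])
  }
  fix \<psi> :: "(nat \<Rightarrow> nat) \<Rightarrow> 'k pX \<Rightarrow> 'k pX" and p :: "'k pX"
  assume psi: "is_Sn_action n \<beta> \<psi>" and p: "p \<in> Xring n"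
  have pa: "alg_aut n (\<psi> \<sigma>)" using psi s by (simp add: is_Sn_action_def)
  have "\<psi> \<sigma> p = ev (\<lambda>v. \<psi> \<sigma> (Var v)) p"
    by (rule hom_ev[where A="idx n"]) (use pa p in \<open>auto simp: alg_aut_def Xring_def\<close>)
  also have "\<dots> = ev (\<lambda>v. xx \<beta> (\<sigma> (fst v)) (\<sigma> (snd v))) p"
  proof (rule ev_cong)
    fix v assume "v \<in> vars p"
    then have v: "fst v \<in> {1..n}" "snd v \<in> {1..n}" "fst v < snd v" using p idx_mem unfolding Xring_def by blast+
    then have "Var v = xx \<beta> (fst v) (snd v)" by (simp add: xx_def)
    then show "\<psi> \<sigma> (Var v) = xx \<beta> (\<sigma> (fst v)) (\<sigma> (snd v))"
      using psi s v unfolding is_Sn_action_def by auto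
  qed
  finally show "\<psi> \<sigma> p = act \<beta> \<sigma> p" by (simp add: act_def)
qed

end
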